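(* Let $L_5=\{-3,-2,-1,0,1\}$ with its natural linear order. Define the games $\star=\{-1\mid -3\}$, and for any game $G$: $\mathsf{M}(G)=\{1\mid G\}$, $\mathsf{P}(G)=\{G\mid -2\}$, $\mathsf{P}_\star(G)=\{G\mid \star\}$. For $n\in\mathbb{N}$ let $\mathsf{P}_n(G)=\mathsf{P}(G)$ if $n$ is odd and $\mathsf{P}_n(G)=\mathsf{P}_\star(G)$ if $n$ is even. Define $G_0=0$ (the atomic game $[0]$) and $G_{n+1}=\mathsf{M}(\mathsf{P}_n(G_n))$. Then for every $n\ge 0$, $G_{n+1}\not\le G_n$.
   Context: Games over a poset $A$ of atoms are defined inductively: for each $a\in A$, $[a]$ is a game (atomic; often written simply $a$); whenever $L,R$ are non-empty sets of games, $\{L\mid R\}$ is a game (composite), with left options the elements of $L$ and right options the elements of $R$; $\{G_1,\dots,G_n\mid H_1,\dots,H_m\}$ denotes $\{\{G_1,\dots,G_n\}\mid\{H_1,\dots,H_m\}\}$. Relations $\le$ and $\lhd$ on games are defined by mutual recursion: $G\le H$ iff (1) every left option $G^L$ of $G$ satisfies $G^L\lhd H$, (2) every right option $H^R$ of $H$ satisfies $G\lhd H^R$, and (3) if $G$ or $H$ is atomic then $G\lhd H$. $G\lhd H$ iff (1) some right option $G^R$ of $G$ satisfies $G^R\le H$, or (2) some left option $H^L$ of $H$ satisfies $G\le H^L$, or (3) $G=[a]$, $H=[b]$ are atomic with $a\le b$ in $A$. *)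

theory Defs
  imports Main
begin

text \<open>Finite games over a poset of atoms. A composite game carries its
(finite, non-empty) lists of left and right options; only the sets of
options matter for the relations below.\<close>

datatype 'a game = Atom 'a | Comp "'a game list" "'a game list"

fun lopts :: "'a game \<Rightarrow> 'a game list" where
  "lopts (Atom a) = []"
| "lopts (Comp L R) = L"

fun ropts :: "'a game \<Rightarrow> 'a game list" where
  "ropts (Atom a) = []"
| "ropts (Comp L R) = R"

fun is_atom :: "'a game \<Rightarrow> bool" where
  "is_atom (Atom a) = True"
| "is_atom (Comp L R) = False"

fun atom_le :: "'a::order game \<Rightarrow> 'a game \<Rightarrow> bool" where
  "atom_le (Atom a) (Atom b) = (a \<le> b)"
| "atom_le _ _ = False"

lemma size_mem_list: "x \<in> set xs \<Longrightarrow> size x \<le> size_list size xs"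
  by (induction xs) auto

lemma size_lopts: "x \<in> set (lopts G) \<Longrightarrow> size x < size G"
  by (cases G) (auto dest: size_mem_list)

lemma size_ropts: "x \<in> set (ropts G) \<Longrightarrow> size x < size G"
  by (cases G) (auto dest: size_mem_list)

function (sequential) game_le :: "'a::order game \<Rightarrow> 'a game \<Rightarrow> bool"
  and game_lf :: "'a::order game \<Rightarrow> 'a game \<Rightarrow> bool" where
  "game_le G H =
     ((\<forall>GL\<in>set (lopts G). game_lf GL H) \<and>
      (\<forall>HR\<in>set (ropts H). game_lf G HR) \<and>
      ((is_atom G \<or> is_atom H) \<longrightarrow> game_lf G H))"
| "game_lf G H =
     ((\<exists>GR\<in>set (ropts G). game_le GR H) \<or>
      (\<exists>HL\<in>set (lopts H). game_le G HL) \<or>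
      atom_le G H)"
  by pat_completeness auto
termination
  by (relation "measures [\<lambda>x. case x of Inl (g,h) \<Rightarrow> size g + size h | Inr (g,h) \<Rightarrow> size g + size h,
                          \<lambda>x. case x of Inl _ \<Rightarrow> 1 | Inr _ \<Rightarrow> 0]")
     (auto dest: size_lopts size_ropts)

text \<open>The atoms are taken from int; all games below only use atoms from
L5 = {-3,-2,-1,0,1}, on which the order of int is the natural linear order.\<close>

definition star_game :: "int game" where
  "star_game = Comp [Atom (-1)] [Atom (-3)]"

definition M_game :: "int game \<Rightarrow> int game" where
  "M_game G = Comp [Atom 1] [G]"

definition P_game :: "int game \<Rightarrow> int game" where
  "P_game G = Comp [G] [Atom (-2)]"

definition Pstar_game :: "int game \<Rightarrow> int game" where
  "Pstar_game G = Comp [G] [star_game]"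

definition Pn_game :: "nat \<Rightarrow> int game \<Rightarrow> int game" where
  "Pn_game n G = (if odd n then P_game G else Pstar_game G)"

fun Gseq :: "nat \<Rightarrow> int game" where
  "Gseq 0 = Atom 0"
| "Gseq (Suc n) = M_game (Pn_game n (Gseq n))"

end

theory Submission
  imports Defs
begin

declare game_le.simps[simp del] game_lf.simps[simp del]

lemma le_CC: "game_le (Comp L R) (Comp L' R') =
  ((\<forall>x\<in>set L. game_lf x (Comp L' R')) \<and> (\<forall>y\<in>set R'. game_lf (Comp L R) y))"
  by (subst game_le.simps) simp

lemma le_CA: "game_le (Comp L R) (Atom b) =
  ((\<forall>x\<in>set L. game_lf x (Atom b)) \<and> game_lf (Comp L R) (Atom b))"
  by (subst game_le.simps) simp

lemma le_AC: "game_le (Atom a) (Comp L' R') =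
  ((\<forall>y\<in>set R'. game_lf (Atom a) y) \<and> game_lf (Atom a) (Comp L' R'))"
  by (subst game_le.simps) simp

lemma le_AA: "game_le (Atom a) (Atom b) = game_lf (Atom a) (Atom b)"
  by (subst game_le.simps) simp

lemma lf_CC: "game_lf (Comp L R) (Comp L' R') =
  ((\<exists>x\<in>set R. game_le x (Comp L' R')) \<or> (\<exists>y\<in>set L'. game_le (Comp L R) y))"
  by (subst game_lf.simps) simp

lemma lf_CA: "game_lf (Comp L R) (Atom b) = (\<exists>x\<in>set R. game_le x (Atom b))"
  by (subst game_lf.simps) simp

lemma lf_AC: "game_lf (Atom a) (Comp L' R') = (\<exists>y\<in>set L'. game_le (Atom a) y)"
  by (subst game_lf.simps) simp

lemma lf_AA: "game_lf (Atom a) (Atom b) = (a \<le> b)"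
  by (subst game_lf.simps) simp

lemmas gsimps = le_CC le_CA le_AC le_AA lf_CC lf_CA lf_AC lf_AA

definition X :: "nat \<Rightarrow> int game" where
  "X m = (if odd m then Atom (-2) else star_game)"

definition P :: "nat \<Rightarrow> int game" where
  "P m = Pn_game m (Gseq m)"

lemma P_eq: "P m = Comp [Gseq m] [X m]"
  by (simp add: P_def Pn_game_def X_def P_game_def Pstar_game_def)

lemma G_Suc: "Gseq (Suc m) = Comp [Atom 1] [P m]"
  by (simp add: P_def M_game_def)

lemma G_0: "Gseq 0 = Atom 0" by simp

declare Gseq.simps[simp del]

lemma E: "\<not> game_lf (Gseq j) (Atom (-1))"
proof (induction j)
  case 0 then show ?case by (simp add: G_0 gsimps)
next
  case (Suc j) then show ?case by (simp add: G_Suc P_eq gsimps)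
qed

lemma parity: "odd m \<noteq> odd k \<Longrightarrow> \<not> game_lf (P m) (X k)"
  using E[of m]
  by (auto simp: P_eq X_def star_game_def gsimps)

lemma main: "\<forall>k<m. \<not> game_le (Gseq m) (Gseq k) \<and> \<not> game_le (P m) (P k)"
proof (induction m)
  case 0 then show ?case by simp
next
  case (Suc m)
  note IH = Suc.IH
  have C: "\<not> game_lf (Gseq (Suc m)) (P k)"
    if "\<not> game_le (Gseq (Suc m)) (Gseq k)" "k < m" for k
    using that IH by (simp add: G_Suc P_eq gsimps)
  have A: "\<not> game_le (Gseq (Suc m)) (Gseq k)" if "k < Suc m" for k
    using that
  proof (induction k)
    case 0 then show ?case by (simp add: G_Suc G_0 gsimps)
  next
    case (Suc k)
    then have "\<not> game_lf (Gseq (Suc m)) (P k)" using C by simp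
    then show ?case by (simp add: G_Suc[of k] G_Suc[of m] le_CC)
  qed
  have B: "\<not> game_le (P (Suc m)) (P k)" if "k < Suc m" for k
  proof (cases "k = m")
    case True
    then show ?thesis using parity[of "Suc m" m] by (simp add: P_eq[of "Suc m"] P_eq[of m] le_CC del: Gseq.simps)
  next
    case False
    then have "k < m" using that by simp
    then have "\<not> game_lf (Gseq (Suc m)) (P k)" using C A that by simp
    then show ?thesis by (simp add: P_eq[of "Suc m"] P_eq[of k] le_CC del: Gseq.simps)
  qed
  show ?case using A B by simp
qed

theorem lemma3p4:
  fixes n :: nat
  shows "\<not> game_le (Gseq (Suc n)) (Gseq n)"
  using main[of "Suc n"] by simp

end
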